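(* Let $(V,L,\varphi,E)$ be a valuation system. Then $\varphi$ is $\Pi$-extendible if and only if there exist a sublattice $C$ of $V$ and a valuation $\psi:C\to E$ such that $(V,C,\psi,E)$ is $\Pi$-complete and $\psi$ extends $\varphi$.
   Context: A valuation system $(V,L,\varphi,E)$ consists of: (i) a lattice $V$ which is $\sigma$-distributive, i.e. for every $a\in V$ and every sequence $(b_n)$ in $V$ whose infimum exists, $\bigwedge_n(a\vee b_n)$ exists and equals $a\vee\bigwedge_n b_n$, and dually for suprema; (ii) a sublattice $L$ of $V$; (iii) a partially ordered abelian group $E$ which is R-complete: whenever $x_1\ge x_2\ge\cdots$ and $y_1\ge y_2\ge\cdots$ in $E$ are such that $\bigwedge_n(x_n+y_n)$ exists, then $\bigwedge_n x_n$ and $\bigwedge_n y_n$ exist, and dually for increasing sequences and suprema; (iv) a valuation $\varphi:L\to E$, i.e. an order-preserving map with $\varphi(a\wedge b)+\varphi(a\vee b)=\varphi(a)+\varphi(b)$. A map $\psi:C\to E$ extends $\varphi:L\to E$ if $L\subseteq C$ and $\psi|_L=\varphi$. A decreasing sequence $a_1\ge a_2\ge\cdots$ in $L$ is $\varphi$-convergent if $\bigwedge_n a_n$ exists in $V$ and $\bigwedge_n\varphi(a_n)$ exists in $E$. The system is $\Pi$-complete if for every $\varphi$-convergent decreasing sequence $(a_n)$ in $L$ we have $\bigwedge_n a_n\in L$ and $\varphi(\bigwedge_n a_n)=\bigwedge_n\varphi(a_n)$. Let $\Pi L:=\{\bigwedge_n a_n: (a_n)\text{ a }\varphi\text{-convergent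 decreasing sequence in }L\}$ (a sublattice of $V$). $\varphi$ is $\Pi$-extendible if there is a valuation $\Pi\varphi:\Pi L\to E$ with $\Pi\varphi(\bigwedge_n a_n)=\bigwedge_n\varphi(a_n)$ for every $\varphi$-convergent decreasing sequence $(a_n)$ in $L$. *)

theory Defs
  imports Main
begin

text \<open>The lattice V is the whole type 'v (class lattice); the partially ordered
abelian group E is the whole type 'e (class ordered_ab_group_add).\<close>

definition is_inf :: "'a::order set \<Rightarrow> 'a \<Rightarrow> bool" where
  "is_inf S x \<longleftrightarrow> (\<forall>y\<in>S. x \<le> y) \<and> (\<forall>z. (\<forall>y\<in>S. z \<le> y) \<longrightarrow> z \<le> x)"

definition is_sup :: "'a::order set \<Rightarrow> 'a \<Rightarrow> bool" where
  "is_sup S x \<longleftrightarrow> (\<forall>y\<in>S. y \<le> x) \<and> (\<forall>z. (\<forall>y\<in>S. y \<le> z) \<longrightarrow> x \<le> z)"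

definition sigma_distributive :: "'v::lattice itself \<Rightarrow> bool" where
  "sigma_distributive _ \<longleftrightarrow>
     (\<forall>(a::'v) (b::nat \<Rightarrow> 'v) x. is_inf (range b) x \<longrightarrow>
         is_inf (range (\<lambda>n. sup a (b n))) (sup a x)) \<and>
     (\<forall>(a::'v) (b::nat \<Rightarrow> 'v) x. is_sup (range b) x \<longrightarrow>
         is_sup (range (\<lambda>n. inf a (b n))) (inf a x))"

definition R_complete :: "'e::ordered_ab_group_add itself \<Rightarrow> bool" where
  "R_complete _ \<longleftrightarrow>
     (\<forall>(x::nat \<Rightarrow> 'e) y. antimono x \<and> antimono y \<and> (\<exists>z. is_inf (range (\<lambda>n. x n + y n)) z) \<longrightarrow>
         (\<exists>u. is_inf (range x) u) \<and> (\<exists>v. is_inf (range y) v)) \<and>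
     (\<forall>(x::nat \<Rightarrow> 'e) y. mono x \<and> mono y \<and> (\<exists>z. is_sup (range (\<lambda>n. x n + y n)) z) \<longrightarrow>
         (\<exists>u. is_sup (range x) u) \<and> (\<exists>v. is_sup (range y) v))"

definition sublattice :: "'v::lattice set \<Rightarrow> bool" where
  "sublattice L \<longleftrightarrow> (\<forall>a\<in>L. \<forall>b\<in>L. inf a b \<in> L \<and> sup a b \<in> L)"

definition valuation :: "'v::lattice set \<Rightarrow> ('v \<Rightarrow> 'e::ordered_ab_group_add) \<Rightarrow> bool" where
  "valuation L \<phi> \<longleftrightarrow>
     (\<forall>a\<in>L. \<forall>b\<in>L. a \<le> b \<longrightarrow> \<phi> a \<le> \<phi> b) \<and>
     (\<forall>a\<in>L. \<forall>b\<in>L. \<phi> (inf a b) + \<phi> (sup a b) = \<phi> a + \<phi> b)"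

definition valuation_system ::
  "'v::lattice set \<Rightarrow> ('v \<Rightarrow> 'e::ordered_ab_group_add) \<Rightarrow> bool" where
  "valuation_system L \<phi> \<longleftrightarrow>
     sigma_distributive TYPE('v) \<and> R_complete TYPE('e) \<and> sublattice L \<and> valuation L \<phi>"

definition extends :: "'v set \<Rightarrow> ('v \<Rightarrow> 'e) \<Rightarrow> 'v set \<Rightarrow> ('v \<Rightarrow> 'e) \<Rightarrow> bool" where
  "extends C \<psi> L \<phi> \<longleftrightarrow> L \<subseteq> C \<and> (\<forall>x\<in>L. \<psi> x = \<phi> x)"

definition phi_convergent ::
  "'v::lattice set \<Rightarrow> ('v \<Rightarrow> 'e::ordered_ab_group_add) \<Rightarrow> (nat \<Rightarrow> 'v) \<Rightarrow> bool" where
  "phi_convergent L \<phi> a \<longleftrightarrow>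
     (\<forall>n. a n \<in> L) \<and> antimono a \<and> (\<exists>x. is_inf (range a) x) \<and> (\<exists>e. is_inf (range (\<lambda>n. \<phi> (a n))) e)"

definition Pi_complete :: "'v::lattice set \<Rightarrow> ('v \<Rightarrow> 'e::ordered_ab_group_add) \<Rightarrow> bool" where
  "Pi_complete L \<phi> \<longleftrightarrow>
     (\<forall>a x. phi_convergent L \<phi> a \<and> is_inf (range a) x \<longrightarrow>
        x \<in> L \<and> is_inf (range (\<lambda>n. \<phi> (a n))) (\<phi> x))"

definition PiL :: "'v::lattice set \<Rightarrow> ('v \<Rightarrow> 'e::ordered_ab_group_add) \<Rightarrow> 'v set" where
  "PiL L \<phi> = {x. \<exists>a. phi_convergent L \<phi> a \<and> is_inf (range a) x}"

definition Pi_extendible :: "'v::lattice set \<Rightarrow> ('v \<Rightarrow> 'e::ordered_ab_group_add) \<Rightarrow> bool" where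
  "Pi_extendible L \<phi> \<longleftrightarrow>
     (\<exists>\<psi>::'v \<Rightarrow> 'e. valuation (PiL L \<phi>) \<psi> \<and>
        (\<forall>a x. phi_convergent L \<phi> a \<and> is_inf (range a) x \<longrightarrow>
           is_inf (range (\<lambda>n. \<phi> (a n))) (\<psi> x)))"

end

theory Submission
  imports Defs
begin

lemma is_inf_range: "is_inf (range f) x \<longleftrightarrow> (\<forall>n. x \<le> f n) \<and> (\<forall>z. (\<forall>n. z \<le> f n) \<longrightarrow> z \<le> x)"
  by (auto simp: is_inf_def)

lemma is_inf_unique: "is_inf S x \<Longrightarrow> is_inf S y \<Longrightarrow> x = y"
  unfolding is_inf_def by (meson order.antisym)

lemma is_inf_const: "is_inf (range (\<lambda>n. c)) c"
  unfolding is_inf_range by simp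

lemma inf_sum:
  fixes X Y :: "nat \<Rightarrow> 'e::ordered_ab_group_add"
  assumes aX: "antimono X" and aY: "antimono Y"
    and iX: "is_inf (range X) u" and iY: "is_inf (range Y) v"
  shows "is_inf (range (\<lambda>n. X n + Y n)) (u + v)"
  unfolding is_inf_range
proof (intro conjI allI impI)
  fix n show "u + v \<le> X n + Y n" using iX iY by (simp add: is_inf_range add_mono)
next
  fix z assume H: "\<forall>n. z \<le> X n + Y n"
  have "z - Y n \<le> X m" for n m
  proof -
    have "z \<le> X (max m n) + Y (max m n)" using H by blast
    also have "\<dots> \<le> X m + Y n"
      by (intro add_mono antimonoD[OF aX] antimonoD[OF aY]) auto
    finally show ?thesis by (simp add: diff_le_eq)
  qed
  hence "z - Y n \<le> u" for n using iX by (simp add: is_inf_range)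
  hence "z - u \<le> Y n" for n by (metis diff_le_eq le_diff_eq add.commute)
  hence "z - u \<le> v" using iY by (simp add: is_inf_range)
  thus "z \<le> u + v" by (metis diff_le_eq add.commute)
qed

lemma conv_lat:
  fixes L :: "'v::lattice set" and \<phi> :: "'v \<Rightarrow> 'e::ordered_ab_group_add"
  assumes vs: "valuation_system L \<phi>"
    and ca: "phi_convergent L \<phi> a" and cb: "phi_convergent L \<phi> b"
    and ix: "is_inf (range a) x" and iy: "is_inf (range b) y"
  shows "phi_convergent L \<phi> (\<lambda>n. inf (a n) (b n))"
    and "is_inf (range (\<lambda>n. inf (a n) (b n))) (inf x y)"
    and "phi_convergent L \<phi> (\<lambda>n. sup (a n) (b n))"
    and "is_inf (range (\<lambda>n. sup (a n) (b n))) (sup x y)"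
proof -
  have sd: "sigma_distributive TYPE('v)" and rc: "R_complete TYPE('e)"
    and sl: "sublattice L" and val: "valuation L \<phi>"
    using vs by (auto simp: valuation_system_def)
  have aL: "\<And>n. a n \<in> L" and bL: "\<And>n. b n \<in> L" and am: "antimono a" and bm: "antimono b"
    using ca cb by (auto simp: phi_convergent_def)
  obtain u where u: "is_inf (range (\<lambda>n. \<phi> (a n))) u" using ca by (auto simp: phi_convergent_def)
  obtain v where v: "is_inf (range (\<lambda>n. \<phi> (b n))) v" using cb by (auto simp: phi_convergent_def)
  have mon: "\<And>p q. p \<in> L \<Longrightarrow> q \<in> L \<Longrightarrow> p \<le> q \<Longrightarrow> \<phi> p \<le> \<phi> q"
    and modl: "\<And>p q. p \<in> L \<Longrightarrow> q \<in> L \<Longrightarrow> \<phi> (inf p q) + \<phi> (sup p q) = \<phi> p + \<phi> q"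
    using val by (auto simp: valuation_def)
  have iL: "inf (a n) (b n) \<in> L" and sL: "sup (a n) (b n) \<in> L" for n
    using sl aL bL by (auto simp: sublattice_def)
  have ami: "antimono (\<lambda>n. inf (a n) (b n))"
    using am bm unfolding antimono_def by (meson inf_mono)
  have ams: "antimono (\<lambda>n. sup (a n) (b n))"
  proof (rule antimonoI)
    fix m n :: nat assume "m \<le> n"
    thus "sup (a n) (b n) \<le> sup (a m) (b m)"
      using antimonoD[OF am] antimonoD[OF bm] by (meson sup_mono)
  qed
  have pa: "antimono (\<lambda>n. \<phi> (a n))" and pb: "antimono (\<lambda>n. \<phi> (b n))"
    using am bm aL bL mon by (auto simp: antimono_def)
  have pi: "antimono (\<lambda>n. \<phi> (inf (a n) (b n)))" and ps: "antimono (\<lambda>n. \<phi> (sup (a n) (b n)))"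
    using ami ams iL sL mon by (auto simp: antimono_def)
  have "is_inf (range (\<lambda>n. \<phi> (a n) + \<phi> (b n))) (u + v)"
    using inf_sum[OF pa pb u v] .
  hence "is_inf (range (\<lambda>n. \<phi> (inf (a n) (b n)) + \<phi> (sup (a n) (b n)))) (u + v)"
    using modl aL bL by simp
  hence ex: "(\<exists>e. is_inf (range (\<lambda>n. \<phi> (inf (a n) (b n)))) e) \<and>
            (\<exists>e. is_inf (range (\<lambda>n. \<phi> (sup (a n) (b n)))) e)"
  proof -
    have "\<forall>(x::nat \<Rightarrow> 'e) y. antimono x \<and> antimono y \<and> (\<exists>z. is_inf (range (\<lambda>n. x n + y n)) z) \<longrightarrow>
         (\<exists>u. is_inf (range x) u) \<and> (\<exists>v. is_inf (range y) v)"
      using rc unfolding R_complete_def by (rule conjunct1)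
    from this[rule_format, of "\<lambda>n. \<phi> (inf (a n) (b n))" "\<lambda>n. \<phi> (sup (a n) (b n))"]
    show ?thesis using pi ps \<open>is_inf (range (\<lambda>n. \<phi> (inf (a n) (b n)) + \<phi> (sup (a n) (b n)))) (u + v)\<close> by blast
  qed
  show ii: "is_inf (range (\<lambda>n. inf (a n) (b n))) (inf x y)"
    using ix iy unfolding is_inf_range by (auto intro: inf_mono le_infI1 le_infI2)
  show "phi_convergent L \<phi> (\<lambda>n. inf (a n) (b n))"
    using iL ami ii ex unfolding phi_convergent_def by blast
  have is_: "is_inf (range (\<lambda>n. sup (a n) (b n))) (sup x y)"
    unfolding is_inf_range
  proof (intro conjI allI impI)
    fix n
    have "x \<le> a n" "y \<le> b n" using ix iy by (simp_all add: is_inf_range)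
    thus "sup x y \<le> sup (a n) (b n)" by (rule sup_mono)
  next
    fix z assume H: "\<forall>n. z \<le> sup (a n) (b n)"
    have sd1: "\<And>c (d::nat \<Rightarrow> 'v) w. is_inf (range d) w \<Longrightarrow> is_inf (range (\<lambda>n. sup c (d n))) (sup c w)"
      using sd unfolding sigma_distributive_def by blast
    have "z \<le> sup (a m) y" for m
    proof -
      have "z \<le> sup (a m) (b n)" for n
      proof -
        have "z \<le> sup (a (max m n)) (b (max m n))" using H by blast
        also have "\<dots> \<le> sup (a m) (b n)"
          by (intro sup_mono antimonoD[OF am] antimonoD[OF bm]) auto
        finally show ?thesis .
      qed
      thus ?thesis using sd1[OF iy, of "a m"] unfolding is_inf_range by blast
    qed
    hence "z \<le> sup y x" using sd1[OF ix, of y] unfolding is_inf_range by (simp add: sup_commute)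
    thus "z \<le> sup x y" by (simp add: sup_commute)
  qed
  show "is_inf (range (\<lambda>n. sup (a n) (b n))) (sup x y)" by (rule is_)
  show "phi_convergent L \<phi> (\<lambda>n. sup (a n) (b n))"
    using sL ams is_ ex unfolding phi_convergent_def by blast
qed

theorem mainTheorem4:
  fixes L :: "'v::lattice set" and \<phi> :: "'v \<Rightarrow> 'e::ordered_ab_group_add"
  assumes "valuation_system L \<phi>"
  shows "Pi_extendible L \<phi> \<longleftrightarrow>
    (\<exists>(C::'v set) (\<psi>::'v \<Rightarrow> 'e). sublattice C \<and> valuation C \<psi> \<and>
        Pi_complete C \<psi> \<and> extends C \<psi> L \<phi>)"
proof
  assume "Pi_extendible L \<phi>"
  then obtain \<psi> :: "'v \<Rightarrow> 'e" where val: "valuation (PiL L \<phi>) \<psi>"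
    and ext: "\<And>a x. phi_convergent L \<phi> a \<Longrightarrow> is_inf (range a) x \<Longrightarrow>
           is_inf (range (\<lambda>n. \<phi> (a n))) (\<psi> x)"
    unfolding Pi_extendible_def by blast
  have valL: "valuation L \<phi>" using assms by (simp add: valuation_system_def)
  have monL: "\<And>p q. p \<in> L \<Longrightarrow> q \<in> L \<Longrightarrow> p \<le> q \<Longrightarrow> \<phi> p \<le> \<phi> q"
    using valL by (auto simp: valuation_def)
  have slL: "sublattice L" using assms by (simp add: valuation_system_def)
  have constc: "phi_convergent L \<phi> (\<lambda>n. c)" if "c \<in> L" for c
    using that is_inf_const[of c] is_inf_const[of "\<phi> c"] unfolding phi_convergent_def antimono_def by blast
  have ext1: "extends (PiL L \<phi>) \<psi> L \<phi>"
    unfolding extends_def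
  proof
    show "L \<subseteq> PiL L \<phi>" using constc is_inf_const unfolding PiL_def by blast
    show "\<forall>x\<in>L. \<psi> x = \<phi> x"
    proof
      fix c assume c: "c \<in> L"
      have "is_inf (range (\<lambda>n. \<phi> c)) (\<psi> c)" using ext[OF constc[OF c] is_inf_const[of c]] by simp
      thus "\<psi> c = \<phi> c" using is_inf_const is_inf_unique by blast
    qed
  qed
  have sub: "sublattice (PiL L \<phi>)"
    unfolding sublattice_def
  proof (intro ballI conjI)
    fix p q assume "p \<in> PiL L \<phi>" "q \<in> PiL L \<phi>"
    then obtain a b where "phi_convergent L \<phi> a" "is_inf (range a) p"
        "phi_convergent L \<phi> b" "is_inf (range b) q" unfolding PiL_def by blast
    from conv_lat[OF assms this(1,3,2,4)]
    show "inf p q \<in> PiL L \<phi>" "sup p q \<in> PiL L \<phi>" unfolding PiL_def by blast+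
  qed
  have pc: "Pi_complete (PiL L \<phi>) \<psi>"
    unfolding Pi_complete_def
  proof (intro allI impI, elim conjE, intro conjI)
    fix X x assume cX: "phi_convergent (PiL L \<phi>) \<psi> X" and ix: "is_inf (range X) x"
    obtain e where ie: "is_inf (range (\<lambda>n. \<psi> (X n))) e" using cX by (auto simp: phi_convergent_def)
    have XP: "\<forall>k. \<exists>a. phi_convergent L \<phi> a \<and> is_inf (range a) (X k)"
      using cX unfolding phi_convergent_def PiL_def by blast
    then obtain a where a: "\<And>k. phi_convergent L \<phi> (a k) \<and> is_inf (range (a k)) (X k)"
      by metis
    have Xm: "antimono X" using cX by (simp add: phi_convergent_def)
    define A where "A = rec_nat (a 0) (\<lambda>k Ak. \<lambda>n. inf (Ak n) (a (Suc k) n))"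
    have A0: "A 0 = a 0" and AS: "\<And>k. A (Suc k) = (\<lambda>n. inf (A k n) (a (Suc k) n))"
      by (simp_all add: A_def)
    have AK: "phi_convergent L \<phi> (A k) \<and> is_inf (range (A k)) (X k)" for k
    proof (induction k)
      case 0 then show ?case using a A0 by simp
    next
      case (Suc k)
      have e: "inf (X k) (X (Suc k)) = X (Suc k)"
        using antimonoD[OF Xm, of k "Suc k"] by (simp add: inf_absorb2)
      show ?case using conv_lat(1,2)[OF assms _ _ _ _, of "A k" "a (Suc k)" "X k" "X (Suc k)"]
          Suc a unfolding AS e by blast
    qed
    have AL: "A k n \<in> L" for k n using AK by (simp add: phi_convergent_def)
    have Akm: "A m n' \<le> A k n" if "k \<le> m" "n \<le> n'" for k m n n'
    proof -
      have "antimono (\<lambda>k. A k n')" unfolding antimono_iff_le_Suc AS by simp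
      hence "A m n' \<le> A k n'" using that antimonoD by blast
      also have "\<dots> \<le> A k n" using AK[of k] that antimonoD unfolding phi_convergent_def by blast
      finally show ?thesis .
    qed
    define B where "B = (\<lambda>n. A n n)"
    have Bm: "antimono B" unfolding B_def by (rule antimonoI) (simp add: Akm)
    have iB: "is_inf (range B) x"
      unfolding is_inf_range
    proof (intro conjI allI impI)
      fix n
      have "x \<le> X n" using ix by (simp add: is_inf_range)
      also have "\<dots> \<le> A n n" using AK[of n] by (simp add: is_inf_range)
      finally show "x \<le> B n" by (simp add: B_def)
    next
      fix z assume H: "\<forall>n. z \<le> B n"
      have "z \<le> A k m" for k m
        using H[rule_format, of "max k m"] Akm[of k "max k m" m "max k m"] unfolding B_def by auto
      hence "z \<le> X k" for k using AK[of k] by (simp add: is_inf_range)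
      thus "z \<le> x" using ix by (simp add: is_inf_range)
    qed
    have PX: "is_inf (range (\<lambda>n. \<phi> (A k n))) (\<psi> (X k))" for k using ext AK by blast
    have ieB: "is_inf (range (\<lambda>n. \<phi> (B n))) e"
      unfolding is_inf_range
    proof (intro conjI allI impI)
      fix n
      have "e \<le> \<psi> (X n)" using ie by (simp add: is_inf_range)
      also have "\<dots> \<le> \<phi> (A n n)" using PX[of n] by (simp add: is_inf_range)
      finally show "e \<le> \<phi> (B n)" by (simp add: B_def)
    next
      fix z assume H: "\<forall>n. z \<le> \<phi> (B n)"
      have "z \<le> \<phi> (A k m)" for k m
      proof -
        have "z \<le> \<phi> (A (max k m) (max k m))" using H by (simp add: B_def)
        also have "\<dots> \<le> \<phi> (A k m)" using monL AL Akm by simp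
        finally show ?thesis .
      qed
      hence "z \<le> \<psi> (X k)" for k using PX[of k] by (simp add: is_inf_range)
      thus "z \<le> e" using ie by (simp add: is_inf_range)
    qed
    have cB: "phi_convergent L \<phi> B"
      unfolding phi_convergent_def using AL Bm iB ieB by (auto simp: B_def)
    show "x \<in> PiL L \<phi>" using cB iB unfolding PiL_def by blast
    have "\<psi> x = e" using ext[OF cB iB] ieB is_inf_unique by blast
    thus "is_inf (range (\<lambda>n. \<psi> (X n))) (\<psi> x)" using ie by simp
  qed
  show "\<exists>(C::'v set) (\<psi>::'v \<Rightarrow> 'e). sublattice C \<and> valuation C \<psi> \<and>
        Pi_complete C \<psi> \<and> extends C \<psi> L \<phi>"
    using sub val pc ext1 by blast
next
  assume "\<exists>(C::'v set) (\<psi>::'v \<Rightarrow> 'e). sublattice C \<and> valuation C \<psi> \<and>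
        Pi_complete C \<psi> \<and> extends C \<psi> L \<phi>"
  then obtain C and \<psi> :: "'v \<Rightarrow> 'e" where val: "valuation C \<psi>" and pc: "Pi_complete C \<psi>"
    and ex: "extends C \<psi> L \<phi>" by blast
  have LC: "L \<subseteq> C" and eq: "\<And>y. y \<in> L \<Longrightarrow> \<psi> y = \<phi> y" using ex by (auto simp: extends_def)
  have key: "x \<in> C \<and> is_inf (range (\<lambda>n. \<phi> (a n))) (\<psi> x)"
    if ca: "phi_convergent L \<phi> a" and ix: "is_inf (range a) x" for a x
  proof -
    have aL: "\<And>n. a n \<in> L" using ca by (simp add: phi_convergent_def)
    hence same: "(\<lambda>n. \<psi> (a n)) = (\<lambda>n. \<phi> (a n))" using eq by auto
    have "phi_convergent C \<psi> a" using ca LC aL unfolding phi_convergent_def same by blast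
    hence "x \<in> C \<and> is_inf (range (\<lambda>n. \<psi> (a n))) (\<psi> x)"
      using pc ix unfolding Pi_complete_def by blast
    thus ?thesis unfolding same .
  qed
  have "PiL L \<phi> \<subseteq> C" using key unfolding PiL_def by blast
  hence "valuation (PiL L \<phi>) \<psi>" using val unfolding valuation_def by blast
  thus "Pi_extendible L \<phi>" unfolding Pi_extendible_def using key by blast
qed

end
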